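(* For every integer $n\geq 5$, $\dot{\imath}_{[1,2]}(P_5\Box P_n)=\left\lfloor \frac{6n+8}{5}\right\rfloor$.
   Context: $P_k$ denotes the path on $k$ vertices and $P_m\Box P_n$ the Cartesian product of two paths (the $m\times n$ grid graph). A set $S$ of vertices of a graph $G$ is independent if no two vertices of $S$ are adjacent, and dominating if every vertex not in $S$ has at least one neighbor in $S$. An independent $[1,2]$-set of $G$ is an independent dominating set $S$ such that every vertex $v\in V(G)\setminus S$ has at least one and at most two neighbors in $S$. When $G$ has an independent $[1,2]$-set, $\dot{\imath}_{[1,2]}(G)$ denotes the minimum cardinality of an independent $[1,2]$-set of $G$ (the statement includes the existence of such a set). *)

theory Defs
  imports Main
begin

definition independent_12_set :: "'a set \<Rightarrow> ('a \<Rightarrow> 'a \<Rightarrow> bool) \<Rightarrow> 'a set \<Rightarrow> bool" where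
  "independent_12_set V E S \<longleftrightarrow>
     S \<subseteq> V \<and>
     (\<forall>u\<in>S. \<forall>v\<in>S. \<not> E u v) \<and>
     (\<forall>v\<in>V - S. 1 \<le> card {u\<in>S. E v u} \<and> card {u\<in>S. E v u} \<le> 2)"

definition grid_vertices :: "nat \<Rightarrow> nat \<Rightarrow> (nat \<times> nat) set" where
  "grid_vertices m n = {1..m} \<times> {1..n}"

definition grid_adj :: "nat \<times> nat \<Rightarrow> nat \<times> nat \<Rightarrow> bool" where
  "grid_adj p q \<longleftrightarrow>
     (fst p = fst q \<and> (snd p + 1 = snd q \<or> snd q + 1 = snd p)) \<or>
     (snd p = snd q \<and> (fst p + 1 = fst q \<or> fst q + 1 = fst p))"

(* minimum cardinality of an independent [1,2]-set (meaningful when one exists) *)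
definition i12 :: "'a set \<Rightarrow> ('a \<Rightarrow> 'a \<Rightarrow> bool) \<Rightarrow> nat" where
  "i12 V E = (LEAST k. \<exists>S. independent_12_set V E S \<and> card S = k)"

end

theory Submission
  imports Defs
begin

definition LB :: "bool list list" where "LB = [[False,False,False,False,False], [True,False,False,False,False], [False,True,False,False,False], [False,False,True,False,False], [True,False,True,False,False], [False,False,False,True,False], [True,False,False,True,False], [False,True,False,True,False], [False,False,False,False,True], [True,False,False,False,True], [False,True,False,False,True], [False,False,True,False,True], [True,False,True,False,True]]"

definition succ :: "nat list list list" where "succ = [[[],[],[],[9],[8],[],[0,2,3,8,10,11],[0,1,8,9],[],[3],[0,1,3,4,5,6],[1],[0]],
 [[],[],[],[8,9,10],[],[2,10],[],[0,8],[],[],[0,3,5],[0,1,2],[]],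
 [[],[],[],[9],[],[1,4,9,12],[0,3,8,11],[],[4],[3],[],[1],[]],
 [[],[],[],[],[],[],[0,2,8,10],[],[],[0,2,3,5,7],[0,1,5,6],[],[]],
 [[],[],[],[],[],[2,10],[],[],[2,7],[],[0,5],[],[]],
 [[],[11],[8,9,11,12],[9],[8],[],[],[],[],[3],[0,1,3,4],[],[]],
 [[],[],[8,11],[8,9,10],[],[],[],[],[],[],[0,3],[],[]],
 [[12],[11],[],[9],[],[],[],[],[4],[3],[],[],[]],
 [[],[],[5,6],[1,6,9],[0,5,8],[],[0,2,3],[0,1],[],[],[],[],[]],
 [[],[],[5],[0,1,2,5,6,7,8,9,10],[],[2],[],[0],[],[],[],[],[]],
 [[],[],[],[1,6,9],[],[1,4],[0,3],[],[],[],[],[],[]],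
 [[],[5,7],[5,6],[],[],[],[0,2],[],[],[],[],[],[]],
 [[7],[],[5],[],[],[2],[],[],[],[],[],[],[]]]"

definition tab :: "int list list list" where
 "tab = [[[0,0,0,0,0,0,0,0,0,0,0,0,0],
  [1000,1000,1000,1000,1000,1000,1000,1000,1000,1000,1000,1000,1000],
  [1000,1000,1000,1000,1000,1000,1000,1000,1000,1000,1000,1000,1000],
  [1000,1000,1000,1000,1000,1000,1000,1000,1000,1000,1000,1000,1000],
  [1000,1000,1000,1000,1000,1000,1000,1000,1000,1000,1000,1000,1000],
  [1000,1000,1000,1000,1000,1000,1000,1000,1000,1000,1000,1000,1000],
  [1000,1000,1000,1000,1000,1000,1000,1000,1000,1000,1000,1000,1000],
  [1000,1000,1000,1000,1000,1000,1000,1000,1000,1000,1000,1000,1000],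
  [1000,1000,1000,1000,1000,1000,1000,1000,1000,1000,1000,1000,1000],
  [1000,1000,1000,1000,1000,1000,1000,1000,1000,1000,1000,1000,1000],
  [1000,1000,1000,1000,1000,1000,1000,1000,1000,1000,1000,1000,1000],
  [1000,1000,1000,1000,1000,1000,1000,1000,1000,1000,1000,1000,1000],
  [1000,1000,1000,1000,1000,1000,1000,1000,1000,1000,1000,1000,1000]],
 [[1000,1000,1000,1000,1000,1000,1000,1000,1000,1000,1000,1000,1000],
  [1000,1000,1000,1000,1000,1000,1000,1000,1000,1000,1000,1000,1000],
  [1000,1000,1000,1000,1000,1000,1000,1000,1000,1000,1000,1000,1000],
  [1000,1000,1000,1000,1000,1000,1000,1000,1000,(-1),1000,1000,1000],
  [1000,1000,1000,1000,1000,1000,1000,1000,4,1000,1000,1000,1000],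
  [1000,1000,1000,1000,1000,1000,1000,1000,1000,1000,1000,1000,1000],
  [4,1000,4,4,1000,1000,1000,1000,4,1000,4,4,1000],
  [4,4,1000,1000,1000,1000,1000,1000,4,4,1000,1000,1000],
  [1000,1000,1000,1000,1000,1000,1000,1000,1000,1000,1000,1000,1000],
  [1000,1000,1000,4,1000,1000,1000,1000,1000,1000,1000,1000,1000],
  [4,4,1000,4,4,4,4,1000,1000,1000,1000,1000,1000],
  [1000,4,1000,1000,1000,1000,1000,1000,1000,1000,1000,1000,1000],
  [9,1000,1000,1000,1000,1000,1000,1000,1000,1000,1000,1000,1000]],
 [[1000,1000,1000,1000,1000,1000,1000,3,1000,1000,1000,1000,(-2)],
  [1000,1000,1000,1000,1000,3,1000,3,1000,1000,1000,3,1000],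
  [1000,1000,1000,1000,1000,1000,1000,1000,3,1000,1000,3,1000],
  [3,3,3,1000,1000,3,3,3,3,3,3,1000,1000],
  [1000,1000,1000,1000,1000,1000,1000,1000,1000,1000,1000,1000,1000],
  [1000,3,1000,1000,3,1000,1000,1000,1000,1000,1000,1000,1000],
  [8,1000,1000,8,1000,1000,1000,1000,1000,1000,1000,1000,1000],
  [1000,1000,1000,1000,1000,1000,1000,1000,1000,1000,1000,1000,1000],
  [1000,1000,3,1000,3,1000,1000,3,1000,1000,1000,1000,1000],
  [3,1000,3,3,1000,3,1000,3,1000,1000,1000,1000,1000],
  [8,1000,1000,8,1000,1000,1000,1000,1000,1000,1000,1000,1000],
  [1000,1000,1000,1000,1000,1000,1000,1000,1000,1000,1000,1000,1000],
  [1000,1000,1000,1000,1000,1000,1000,1000,1000,1000,1000,1000,1000]],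
 [[1000,1000,1000,1000,1000,1000,1000,1000,1000,1000,1000,1000,1000],
  [1000,1000,1000,1000,1000,1000,1000,1000,1000,1000,1000,2,1000],
  [1000,1000,1000,1000,1000,2,2,1000,1000,1000,1000,1000,1000],
  [2,2,2,1000,1000,2,2,2,2,2,2,1000,1000],
  [7,1000,1000,1000,1000,7,1000,1000,7,1000,1000,1000,1000],
  [1000,1000,2,1000,1000,1000,1000,1000,1000,1000,2,1000,1000],
  [7,1000,7,1000,1000,1000,1000,1000,7,1000,7,1000,1000],
  [7,7,1000,1000,1000,1000,1000,1000,7,7,1000,1000,1000],
  [1000,1000,1000,1000,2,1000,1000,1000,1000,1000,1000,1000,1000],
  [7,1000,7,7,1000,7,1000,7,1000,1000,1000,1000,1000],
  [7,7,1000,1000,1000,7,7,1000,1000,1000,1000,1000,1000],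
  [7,7,7,1000,1000,1000,1000,1000,1000,1000,1000,1000,1000],
  [7,1000,1000,1000,1000,1000,1000,1000,1000,1000,1000,1000,1000]],
 [[1000,1000,1000,1000,1000,1000,1000,1,1000,1000,1000,1000,1],
  [1000,1000,1000,1000,1000,6,1000,6,1000,1000,1000,6,1000],
  [1000,1000,1000,1000,1000,6,6,1000,1,1,1000,1,1],
  [6,6,6,1000,1000,6,6,6,6,6,6,1000,1000],
  [6,1000,1000,1000,1000,6,1000,1000,6,1000,1000,1000,1000],
  [1000,1,6,1000,1,1000,1000,1000,1000,1,6,1000,1],
  [6,1000,6,6,1000,1000,1000,1000,6,1000,6,6,1000],
  [11,1000,1000,1000,1000,1000,1000,1000,1000,1000,1000,1000,1000],
  [1000,1000,6,1000,6,1000,1000,6,1000,1000,1000,1000,1000],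
  [6,1000,6,6,1000,6,1000,6,1000,1000,1000,1000,1000],
  [6,6,1000,6,6,6,6,1000,1000,1000,1000,1000,1000],
  [6,6,6,1000,1000,1000,1000,1000,1000,1000,1000,1000,1000],
  [1000,1000,1000,1000,1000,1000,1000,1000,1000,1000,1000,1000,1000]],
 [[1000,1000,1000,1000,1000,1000,1000,2,1000,1000,1000,1000,(-1)],
  [1000,1000,1000,1000,1000,3,1000,3,1000,1000,1000,0,1000],
  [1000,1000,1000,1000,1000,2,2,1000,1,1,1000,1,1],
  [4,4,4,1000,1000,4,4,4,4,4,4,1000,1000],
  [4,1000,1000,1000,1000,4,1000,1000,4,1000,1000,1000,1000],
  [1000,1,2,1000,1,1000,1000,1000,1000,1,2,1000,1],
  [6,1000,8,6,1000,1000,1000,1000,6,1000,8,6,1000],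
  [5,5,1000,1000,1000,1000,1000,1000,5,5,1000,1000,1000],
  [1000,1000,3,1000,0,1000,1000,3,1000,1000,1000,1000,1000],
  [8,1000,8,5,1000,8,1000,8,1000,1000,1000,1000,1000],
  [6,6,1000,6,6,8,8,1000,1000,1000,1000,1000,1000],
  [4,4,4,1000,1000,1000,1000,1000,1000,1000,1000,1000,1000],
  [8,1000,1000,1000,1000,1000,1000,1000,1000,1000,1000,1000,1000]]]"

definition bi :: "bool \<Rightarrow> nat" where "bi P = (if P then 1 else 0)"

definition okP :: "(nat \<Rightarrow> bool) \<Rightarrow> (nat \<Rightarrow> bool) \<Rightarrow> (nat \<Rightarrow> bool) \<Rightarrow> bool" where
  "okP a b c \<longleftrightarrow> (\<forall>i\<in>{1,2,3,4,5}. if b i then \<not> a i \<and> \<not> c i \<and> \<not> b (Suc i)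
     else 1 \<le> bi (b (i-1)) + bi (b (Suc i)) + bi (a i) + bi (c i)
          \<and> bi (b (i-1)) + bi (b (Suc i)) + bi (a i) + bi (c i) \<le> 2)"

definition mem :: "bool list \<Rightarrow> nat \<Rightarrow> bool" where
  "mem xs i \<longleftrightarrow> 1 \<le> i \<and> i \<le> 5 \<and> xs ! (i - 1)"

definition okb :: "nat \<Rightarrow> nat \<Rightarrow> nat \<Rightarrow> bool" where
  "okb a b c \<longleftrightarrow> okP (mem (LB!a)) (mem (LB!b)) (mem (LB!c))"

definition wt :: "nat \<Rightarrow> nat" where "wt b = length (filter (mem (LB!b)) [1..<6])"

definition phi :: "nat \<Rightarrow> nat \<Rightarrow> nat \<Rightarrow> int" where
  "phi k a b = tab ! k ! a ! b"

lemma S1: "list_all (\<lambda>a. list_all (\<lambda>b. filter (\<lambda>c. okb a b c) [0..<13] = succ!a!b) [0..<13]) [0..<13]"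
  by code_simp

lemma C1: "list_all (\<lambda>k. list_all (\<lambda>a. list_all (\<lambda>b. list_all (\<lambda>c.
   phi (min (Suc k) 5) b c < 1000 \<and> phi (min (Suc k) 5) b c \<le> phi k a b + 5 * int (wt b) - 6)
   (if phi k a b < 1000 then succ!a!b else [])) [0..<13]) [0..<13]) [0..<6]"
  by code_simp

lemma C2: "list_all (\<lambda>b. phi 0 0 b \<le> 0 \<and> phi 0 0 b < 1000) [0..<13]"
  by code_simp

lemma C3: "list_all (\<lambda>a. 4 \<le> phi 5 a 0) [0..<13]"
  by code_simp

lemma C4: "list_all (\<lambda>a. a = 0 \<or> (\<exists>i\<in>{1,2,3,4,5}. mem (LB!a) i)) [0..<13]"
  by code_simp

lemma C5: "length LB = 13" by (simp add: LB_def)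

lemma C6: "mem (LB!0) i = False" by (simp add: LB_def mem_def nth_Cons')

lemma inLB:
  fixes P :: "nat \<Rightarrow> bool"
  assumes r: "\<And>i. P i \<Longrightarrow> 1 \<le> i \<and> i \<le> 5" and c: "\<And>i. P i \<Longrightarrow> \<not> P (Suc i)"
  shows "\<exists>a<13. P = mem (LB!a)"
proof -
  define xs where "xs = [P 1, P 2, P 3, P 4, P 5]"
  have eq: "P = mem xs"
  proof
    fix i :: nat
    have "i = 0 \<or> i = 1 \<or> i = 2 \<or> i = 3 \<or> i = 4 \<or> i = 5 \<or> i > 5" by arith
    then show "P i = mem xs i"
    proof (elim disjE)
      assume "i > 5" then show ?thesis using r[of i] by (auto simp: mem_def)
    qed (use r[of 0] in \<open>auto simp: mem_def xs_def\<close>)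
  qed
  have "\<not> (P 1 \<and> P 2)" "\<not> (P 2 \<and> P 3)" "\<not> (P 3 \<and> P 4)" "\<not> (P 4 \<and> P 5)"
    using c[of 1] c[of 2] c[of 3] c[of 4] by (auto simp: numeral_eq_Suc)
  then have "xs \<in> set LB"
    unfolding xs_def LB_def
    by (cases "P 1"; cases "P 2"; cases "P 3"; cases "P 4"; cases "P 5") simp_all
  then obtain a where "a < length LB" "LB ! a = xs" by (auto simp: in_set_conv_nth)
  then show ?thesis using eq C5 by auto
qed

lemma nbr_card:
  assumes "1 \<le> i" "1 \<le> j"
  shows "card {u\<in>S. grid_adj (i,j) u} = bi ((i-1,j)\<in>S) + bi ((Suc i,j)\<in>S) + bi ((i,j-1)\<in>S) + bi ((i,Suc j)\<in>S)"
proof -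
  have e: "{u\<in>S. grid_adj (i,j) u} = {u \<in> {(i-1,j),(Suc i,j),(i,j-1),(i,Suc j)}. u\<in>S}"
    using assms by (auto simp: grid_adj_def)
  have "card {u \<in> {(i-1,j),(Suc i,j),(i,j-1),(i,Suc j)}. u\<in>S}
      = (\<Sum>u\<in>{(i-1,j),(Suc i,j),(i,j-1),(i,Suc j)}. bi (u\<in>S))"
  proof -
    have "(\<Sum>u\<in>{(i-1,j),(Suc i,j),(i,j-1),(i,Suc j)}. bi (u\<in>S))
        = (\<Sum>u\<in>{u \<in> {(i-1,j),(Suc i,j),(i,j-1),(i,Suc j)}. u\<in>S}. 1)"
      by (subst sum.inter_filter) (auto simp: bi_def)
    then show ?thesis by simp
  qed
  also have "\<dots> = bi ((i-1,j)\<in>S) + bi ((Suc i,j)\<in>S) + bi ((i,j-1)\<in>S) + bi ((i,Suc j)\<in>S)"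
    using assms by simp
  finally show ?thesis using e by simp
qed

definition cP :: "(nat \<times> nat) set \<Rightarrow> nat \<Rightarrow> nat \<Rightarrow> bool" where
  "cP S j i \<longleftrightarrow> (i,j) \<in> S"

lemma char:
  assumes sub: "S \<subseteq> grid_vertices 5 n"
  shows "independent_12_set (grid_vertices 5 n) grid_adj S \<longleftrightarrow>
         (\<forall>j\<in>{1..n}. okP (cP S (j-1)) (cP S j) (cP S (Suc j)))"
proof
  assume ind: "independent_12_set (grid_vertices 5 n) grid_adj S"
  show "\<forall>j\<in>{1..n}. okP (cP S (j-1)) (cP S j) (cP S (Suc j))"
  proof
    fix j assume j: "j \<in> {1..n}"
    show "okP (cP S (j-1)) (cP S j) (cP S (Suc j))"
      unfolding okP_def
    proof
      fix i assume i: "i \<in> {1::nat,2,3,4,5}"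
      have i1: "1 \<le> i" "i \<le> 5" using i by auto
      have indep: "\<And>u v. u \<in> S \<Longrightarrow> v \<in> S \<Longrightarrow> \<not> grid_adj u v"
        using ind by (auto simp: independent_12_set_def)
      show "if cP S j i then \<not> cP S (j - 1) i \<and> \<not> cP S (Suc j) i \<and> \<not> cP S j (Suc i)
         else 1 \<le> bi (cP S j (i - 1)) + bi (cP S j (Suc i)) + bi (cP S (j - 1) i) + bi (cP S (Suc j) i) \<and>
           bi (cP S j (i - 1)) + bi (cP S j (Suc i)) + bi (cP S (j - 1) i) + bi (cP S (Suc j) i) \<le> 2"
      proof (cases "cP S j i")
        case True
        then have "(i,j) \<in> S" by (simp add: cP_def)
        moreover have "grid_adj (i,j) (i,j-1)" "grid_adj (i,j) (i,Suc j)" "grid_adj (i,j) (Suc i,j)"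
          using j by (auto simp: grid_adj_def)
        ultimately show ?thesis using True indep by (auto simp: cP_def)
      next
        case False
        then have "(i,j) \<in> grid_vertices 5 n - S" using i1 j by (auto simp: cP_def grid_vertices_def)
        then have "1 \<le> card {u\<in>S. grid_adj (i,j) u} \<and> card {u\<in>S. grid_adj (i,j) u} \<le> 2"
          using ind by (auto simp: independent_12_set_def)
        then show ?thesis using False nbr_card[of i j S] i1 j by (simp add: cP_def add.commute add.left_commute)
      qed
    qed
  qed
next
  assume okc: "\<forall>j\<in>{1..n}. okP (cP S (j-1)) (cP S j) (cP S (Suc j))"
  have okr: "\<And>i j. i \<in> {1..5} \<Longrightarrow> j \<in> {1..n} \<Longrightarrow>
     (if cP S j i then \<not> cP S (j - 1) i \<and> \<not> cP S (Suc j) i \<and> \<not> cP S j (Suc i)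
         else 1 \<le> bi (cP S j (i - 1)) + bi (cP S j (Suc i)) + bi (cP S (j - 1) i) + bi (cP S (Suc j) i) \<and>
           bi (cP S j (i - 1)) + bi (cP S j (Suc i)) + bi (cP S (j - 1) i) + bi (cP S (Suc j) i) \<le> 2)"
  proof -
    fix i j assume i: "i \<in> {1..5::nat}" and j: "j \<in> {1..n}"
    have "i \<in> {1,2,3,4,5}" using i by auto
    then show "?thesis i j" using okc j unfolding okP_def by blast
  qed
  have indep: "\<forall>u\<in>S. \<forall>v\<in>S. \<not> grid_adj u v"
  proof (intro ballI notI)
    fix u v assume u: "u \<in> S" and v: "v \<in> S" and a: "grid_adj u v"
    obtain i j where uij: "u = (i,j)" by fastforce
    obtain i' j' where vij: "v = (i',j')" by fastforce
    have ui: "i \<in> {1..5}" "j \<in> {1..n}" using u sub uij by (auto simp: grid_vertices_def)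
    have vi: "i' \<in> {1..5}" "j' \<in> {1..n}" using v sub vij by (auto simp: grid_vertices_def)
    have cu: "cP S j i" using u uij by (simp add: cP_def)
    have cv: "cP S j' i'" using v vij by (simp add: cP_def)
    from a consider "i' = i" "j' = Suc j" | "i' = i" "j = Suc j'" | "j' = j" "i' = Suc i" | "j' = j" "i = Suc i'"
      unfolding grid_adj_def uij vij by auto
    then show False
    proof cases
      case 1 then show ?thesis using okr[OF ui] cu cv by simp
    next
      case 2 then show ?thesis using okr[OF vi] cu cv by simp
    next
      case 3 then show ?thesis using okr[OF ui] cu cv by simp
    next
      case 4 then show ?thesis using okr[OF vi] cu cv by simp
    qed
  qed
  have cnt: "\<forall>v\<in>grid_vertices 5 n - S. 1 \<le> card {u\<in>S. grid_adj v u} \<and> card {u\<in>S. grid_adj v u} \<le> 2"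
  proof
    fix v assume v: "v \<in> grid_vertices 5 n - S"
    obtain i j where vij: "v = (i,j)" by fastforce
    have vi: "i \<in> {1..5}" "j \<in> {1..n}" using v vij by (auto simp: grid_vertices_def)
    have "\<not> cP S j i" using v vij by (simp add: cP_def)
    then show "1 \<le> card {u\<in>S. grid_adj v u} \<and> card {u\<in>S. grid_adj v u} \<le> 2"
      using okr[OF vi] nbr_card[of i j S] vi vij by (simp add: cP_def add.commute add.left_commute)
  qed
  show "independent_12_set (grid_vertices 5 n) grid_adj S"
    unfolding independent_12_set_def using sub indep cnt by blast
qed


lemma card_cols:
  assumes sub: "S \<subseteq> grid_vertices 5 n"
  shows "card S = (\<Sum>j\<in>{1..n}. card {i. (i,j) \<in> S})"
proof -
  have e: "S = (\<Union>j\<in>{1..n}. (\<lambda>i. (i,j)) ` {i. (i,j) \<in> S})"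
    using sub by (auto simp: grid_vertices_def)
  have fin: "\<And>j. finite {i. (i,j) \<in> S}"
  proof -
    fix j
    have "{i. (i,j) \<in> S} \<subseteq> {1..5}" using sub by (auto simp: grid_vertices_def)
    then show "finite {i. (i,j) \<in> S}" using finite_subset by blast
  qed
  have "card S = (\<Sum>j\<in>{1..n}. card ((\<lambda>i. (i,j)) ` {i. (i,j) \<in> S}))"
    by (subst e, rule card_UN_disjoint) (auto simp: fin)
  also have "\<dots> = (\<Sum>j\<in>{1..n}. card {i. (i,j) \<in> S})"
    by (rule sum.cong) (auto simp: card_image inj_on_def)
  finally show ?thesis .
qed

lemma card_mem: "card {i. mem (LB!a) i} = wt a"
proof -
  have e: "{i. mem (LB!a) i} = set (filter (mem (LB!a)) [1..<6])" by (auto simp: mem_def)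
  have d: "card (set (filter (mem (LB!a)) [1..<6])) = length (filter (mem (LB!a)) [1..<6])"
    by (rule distinct_card) simp
  show ?thesis unfolding wt_def e d ..
qed

lemma C1':
  assumes "k < 6" "a < 13" "b < 13" "phi k a b < 1000" "c \<in> set (succ!a!b)"
  shows "phi (min (Suc k) 5) b c < 1000 \<and> phi (min (Suc k) 5) b c \<le> phi k a b + 5 * int (wt b) - 6"
proof -
  have "list_all (\<lambda>c.
   phi (min (Suc k) 5) b c < 1000 \<and> phi (min (Suc k) 5) b c \<le> phi k a b + 5 * int (wt b) - 6)
   (if phi k a b < 1000 then succ!a!b else [])"
  proof -
    have h: "\<forall>k\<in>set [0..<6]. \<forall>a\<in>set [0..<13]. \<forall>b\<in>set [0..<13]. list_all (\<lambda>c.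
      phi (min (Suc k) 5) b c < 1000 \<and> phi (min (Suc k) 5) b c \<le> phi k a b + 5 * int (wt b) - 6)
      (if phi k a b < 1000 then succ!a!b else [])"
      using C1 by (simp only: list_all_iff)
    have "k \<in> set [0..<6]" "a \<in> set [0..<13]" "b \<in> set [0..<13]" using assms by auto
    then show ?thesis using h by blast
  qed
  then show ?thesis using assms(4,5) by (simp add: list_all_iff)
qed

lemma lower:
  assumes n: "n \<ge> 5" and ind: "independent_12_set (grid_vertices 5 n) grid_adj S"
  shows "(6 * n + 8) div 5 \<le> card S"
proof -
  have sub: "S \<subseteq> grid_vertices 5 n" using ind by (simp add: independent_12_set_def)
  have okc: "\<forall>j\<in>{1..n}. okP (cP S (j-1)) (cP S j) (cP S (Suc j))" using char[OF sub] ind by blast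
  have ex: "\<exists>a<13. cP S j = mem (LB!a)" for j
  proof (rule inLB)
    fix i assume "cP S j i" then show "1 \<le> i \<and> i \<le> 5" using sub by (auto simp: cP_def grid_vertices_def)
  next
    fix i assume c: "cP S j i"
    then have j: "j \<in> {1..n}" and i: "i \<in> {1,2,3,4,5}" using sub by (auto simp: cP_def grid_vertices_def)
    from okc j have "okP (cP S (j-1)) (cP S j) (cP S (Suc j))" by blast
    then show "\<not> cP S j (Suc i)" using i c unfolding okP_def by metis
  qed
  define ix where "ix j = (SOME a. a < 13 \<and> cP S j = mem (LB!a))" for j
  have ix: "ix j < 13 \<and> cP S j = mem (LB!(ix j))" for j
    unfolding ix_def using someI_ex[OF ex[of j]] .
  have zero: "ix j = 0" if "j = 0 \<or> j = Suc n" for j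
  proof -
    have "\<forall>i. \<not> cP S j i" using sub that by (auto simp: cP_def grid_vertices_def)
    then have "\<not> (\<exists>i\<in>{1,2,3,4,5}. mem (LB!(ix j)) i)" using ix[of j] by metis
    moreover have "ix j = 0 \<or> (\<exists>i\<in>{1,2,3,4,5}. mem (LB!(ix j)) i)"
      using C4 ix[of j] by (simp add: list_all_iff)
    ultimately show ?thesis by blast
  qed
  have wtix: "card {i. (i,j) \<in> S} = wt (ix j)" for j
  proof -
    have "\<forall>i. cP S j i = mem (LB!(ix j)) i" using ix[of j] by simp
    then have "{i. (i,j) \<in> S} = {i. mem (LB!(ix j)) i}" by (auto simp: cP_def)
    then show ?thesis using card_mem by simp
  qed
  have step: "m \<le> n \<Longrightarrow> phi (min m 5) (ix m) (ix (Suc m)) < 1000 \<and>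
      phi (min m 5) (ix m) (ix (Suc m)) \<le> (\<Sum>i\<in>{1..m}. 5 * int (wt (ix i)) - 6)" for m
  proof (induction m)
    case 0
    have "ix 0 = 0" using zero by simp
    then show ?case using C2 ix[of 1] by (simp add: list_all_iff)
  next
    case (Suc m)
    have IH: "phi (min m 5) (ix m) (ix (Suc m)) < 1000"
        "phi (min m 5) (ix m) (ix (Suc m)) \<le> (\<Sum>i\<in>{1..m}. 5 * int (wt (ix i)) - 6)"
      using Suc by auto
    have "okP (cP S (Suc m - 1)) (cP S (Suc m)) (cP S (Suc (Suc m)))" using okc[rule_format, of "Suc m"] Suc.prems by simp
    then have "okb (ix m) (ix (Suc m)) (ix (Suc (Suc m)))"
      unfolding okb_def using ix[of m] ix[of "Suc m"] ix[of "Suc (Suc m)"] by simp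
    then have "ix (Suc (Suc m)) \<in> set (filter (okb (ix m) (ix (Suc m))) [0..<13])"
      using ix[of "Suc (Suc m)"] by simp
    moreover have "filter (okb (ix m) (ix (Suc m))) [0..<13] = succ ! (ix m) ! (ix (Suc m))"
      using S1 ix[of m] ix[of "Suc m"] by (simp add: list_all_iff)
    ultimately have "ix (Suc (Suc m)) \<in> set (succ ! (ix m) ! (ix (Suc m)))" by simp
    then have "phi (min (Suc (min m 5)) 5) (ix (Suc m)) (ix (Suc (Suc m))) < 1000 \<and>
       phi (min (Suc (min m 5)) 5) (ix (Suc m)) (ix (Suc (Suc m)))
         \<le> phi (min m 5) (ix m) (ix (Suc m)) + 5 * int (wt (ix (Suc m))) - 6"
      using C1'[OF _ _ _ IH(1)] ix[of m] ix[of "Suc m"] by simp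
    moreover have "min (Suc (min m 5)) 5 = min (Suc m) 5" by simp
    ultimately show ?case using IH(2) by simp
  qed
  have f: "phi 5 (ix n) (ix (Suc n)) \<le> (\<Sum>i\<in>{1..n}. 5 * int (wt (ix i)) - 6)"
    using step[of n] n by (simp add: min_absorb2)
  have "4 \<le> phi 5 (ix n) (ix (Suc n))" using C3 ix[of n] zero[of "Suc n"] by (simp add: list_all_iff)
  moreover have "(\<Sum>i\<in>{1..n}. 5 * int (wt (ix i)) - 6) = 5 * (\<Sum>i\<in>{1..n}. int (wt (ix i))) - 6 * int n"
    by (simp add: sum_subtractf sum_distrib_left)
  moreover have "(\<Sum>i\<in>{1..n}. int (wt (ix i))) = int (card S)"
    using card_cols[OF sub] wtix by (simp add: of_nat_sum)
  ultimately have "4 \<le> 5 * int (card S) - 6 * int n" using f by linarith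
  then show ?thesis by linarith
qed


fun validw :: "nat \<Rightarrow> nat list \<Rightarrow> bool" where
  "validw a [] = True"
| "validw a [b] = okb a b 0"
| "validw a (b # c # r) = (okb a b c \<and> validw b (c # r))"

lemma validw_nth0:
  "validw a cs \<Longrightarrow> i < length cs \<Longrightarrow>
   okb (if i = 0 then a else cs!(i-1)) (cs!i) (if Suc i < length cs then cs!(Suc i) else 0)"
proof (induction a cs arbitrary: i rule: validw.induct)
  case (1 a)
  then show ?case by simp
next
  case (2 a b)
  then show ?case by simp
next
  case (3 a b c r)
  show ?case
  proof (cases i)
    case 0
    then show ?thesis using "3.prems" by simp
  next
    case (Suc i')
    have v: "validw b (c # r)" using "3.prems"(1) by simp
    have l: "i' < length (c # r)" using "3.prems"(2) Suc by simp
    have h: "okb (if i' = 0 then b else (c#r)!(i'-1)) ((c#r)!i') (if Suc i' < length (c#r) then (c#r)!(Suc i') else 0)"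
      by (rule "3.IH"[OF v l])
    have e1: "(if i = 0 then a else (b#c#r)!(i-1)) = (if i' = 0 then b else (c#r)!(i'-1))"
      using Suc by (cases i') auto
    have e2: "(b#c#r)!i = (c#r)!i'" using Suc by simp
    have e3: "(if Suc i < length (b#c#r) then (b#c#r)!(Suc i) else 0) = (if Suc i' < length (c#r) then (c#r)!(Suc i') else 0)"
      using Suc by simp
    show ?thesis unfolding e1 e2 e3 by (rule h)
  qed
qed

lemma validw_nth:
  assumes "validw a cs" "1 \<le> j" "j \<le> length cs"
  shows "okb (if j = 1 then a else cs!(j-2)) (cs!(j-1)) (if j < length cs then cs!j else 0)"
proof -
  obtain i where i: "j = Suc i" using assms(2) by (cases j) auto
  have "okb (if i = 0 then a else cs!(i-1)) (cs!i) (if Suc i < length cs then cs!(Suc i) else 0)"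
    using validw_nth0[OF assms(1)] assms(3) i by simp
  moreover have "(if j = 1 then a else cs!(j-2)) = (if i = 0 then a else cs!(i-1))" using i by auto
  moreover have "cs!(j-1) = cs!i" using i by simp
  moreover have "(if j < length cs then cs!j else 0) = (if Suc i < length cs then cs!(Suc i) else 0)"
    using i by simp
  ultimately show ?thesis by simp
qed

definition mkS :: "nat list \<Rightarrow> (nat \<times> nat) set" where
  "mkS cs = {(i,j). 1 \<le> j \<and> j \<le> length cs \<and> mem (LB!(cs!(j-1))) i}"

lemma sum_list_idx: "sum_list (map f xs) = (\<Sum>j\<in>{1..length xs}. f (xs!(j-1)))"
proof -
  have "sum_list (map f xs) = (\<Sum>i<length xs. f (xs!i))"
    by (simp add: sum_list_sum_nth atLeast0LessThan)
  also have "\<dots> = (\<Sum>j\<in>{1..length xs}. f (xs!(j-1)))"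
    by (simp add: sum.atLeast1_atMost_eq)
  finally show ?thesis .
qed

lemma upper:
  assumes v: "validw 0 cs"
  shows "\<exists>S. independent_12_set (grid_vertices 5 (length cs)) grid_adj S \<and> card S = sum_list (map wt cs)"
proof -
  let ?n = "length cs"
  define S where "S = mkS cs"
  have sub: "S \<subseteq> grid_vertices 5 ?n" by (auto simp: S_def mkS_def grid_vertices_def mem_def)
  have col: "cP S j = mem (LB!(if 1 \<le> j \<and> j \<le> ?n then cs!(j-1) else 0))" for j
    by (auto simp: S_def mkS_def cP_def C6 fun_eq_iff)
  have okc: "\<forall>j\<in>{1..?n}. okP (cP S (j-1)) (cP S j) (cP S (Suc j))"
  proof
    fix j assume j: "j \<in> {1..?n}"
    have "okb (if j = 1 then 0 else cs!(j-2)) (cs!(j-1)) (if j < ?n then cs!j else 0)"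
      using validw_nth[OF v, of j] j by simp
    moreover have "(if 1 \<le> j - 1 \<and> j - 1 \<le> ?n then cs!(j-1-1) else 0) = (if j = 1 then 0 else cs!(j-2))"
      using j by (auto simp: numeral_2_eq_2)
    moreover have "(if 1 \<le> Suc j \<and> Suc j \<le> ?n then cs!(Suc j-1) else 0) = (if j < ?n then cs!j else 0)"
      using j by auto
    ultimately show "okP (cP S (j-1)) (cP S j) (cP S (Suc j))"
      unfolding col okb_def using j by simp
  qed
  have ind: "independent_12_set (grid_vertices 5 ?n) grid_adj S" using char[OF sub] okc by blast
  have "card S = (\<Sum>j\<in>{1..?n}. card {i. (i,j) \<in> S})" by (rule card_cols[OF sub])
  also have "\<dots> = (\<Sum>j\<in>{1..?n}. wt (cs!(j-1)))"
  proof (rule sum.cong)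
    fix j assume j: "j \<in> {1..?n}"
    have "\<forall>i. cP S j i = mem (LB!(cs!(j-1))) i" using col[of j] j by simp
    then have "{i. (i,j) \<in> S} = {i. mem (LB!(cs!(j-1))) i}" by (auto simp: cP_def)
    then show "card {i. (i,j) \<in> S} = wt (cs!(j-1))" using card_mem by simp
  qed simp
  also have "\<dots> = sum_list (map wt cs)" by (simp add: sum_list_idx)
  finally show ?thesis using ind by blast
qed

lemma okB: "okb 1 5 2 \<and> okb 5 2 8 \<and> okb 2 8 4 \<and> okb 8 4 8 \<and> okb 4 8 2 \<and> okb 8 2 5 \<and> okb 2 5 1
   \<and> okb 5 1 11 \<and> okb 1 11 1 \<and> okb 11 1 5"
  by code_simp

lemma wtB: "sum_list (map wt [1,5,2,8,4,8,2,5,1,11]) = 12"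
  by code_simp

lemma ins: "validw a (U @ 1 # 5 # R) \<Longrightarrow> validw a (U @ [1,5,2,8,4,8,2,5,1,11] @ 1 # 5 # R)"
proof (induction U arbitrary: a)
  case Nil
  then show ?case using okB by simp
next
  case (Cons u U')
  show ?case
  proof (cases U')
    case Nil
    then show ?thesis using Cons.prems Cons.IH[of u] by simp
  next
    case (Cons v W)
    then show ?thesis using Cons.prems Cons.IH[of u] by simp
  qed
qed

definition T10 :: "(nat \<times> nat list \<times> nat list) list" where
  "T10 = [(10, [3,9,5,2,11], [2,8,4]),
 (11, [3,9,2,5,1,11], [2,8,4]),
 (12, [3,9,2,5,1,11], [2,9,3,6]),
 (13, [3,9,2,5,1,11], [2,8,4,5,10]),
 (14, [3,9,2,5,1,11], [2,8,4,8,2,6]),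
 (15, [3,9,2,5,1,11], [2,8,4,5,2,8,4]),
 (16, [3,9,2,5,1,11], [2,8,4,8,2,5,1,11]),
 (17, [3,9,2,5,1,11], [2,8,4,5,2,8,4,5,10]),
 (18, [3,9,2,5,1,11], [2,8,4,5,2,8,4,8,2,6]),
 (19, [3,9,2,5,1,11], [2,8,4,5,2,8,4,5,2,8,4])]"

definition T5 :: "(nat \<times> nat list) list" where
  "T5 = [(5, [3,9,3,9,3]), (6, [3,9,2,5,1,11]), (7, [3,9,2,5,4,8,7]), (8, [3,9,2,5,1,11,1,7]),
    (9, [3,9,2,5,1,11,1,5,10])]"

lemma T10ok: "list_all (\<lambda>(n,U,R). length (U @ 1 # 5 # R) = n \<and> validw 0 (U @ 1 # 5 # R)
   \<and> sum_list (map wt (U @ 1 # 5 # R)) = (6*n+8) div 5) T10"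
  by code_simp

lemma T5ok: "list_all (\<lambda>(n,cs). length cs = n \<and> validw 0 cs \<and> sum_list (map wt cs) = (6*n+8) div 5) T5"
  by code_simp

lemma T10fst: "map fst T10 = [10..<20]" by (simp add: T10_def upt_rec)
lemma T5fst: "map fst T5 = [5..<10]" by (simp add: T5_def upt_rec)

lemma seqs10: "n \<ge> 10 \<Longrightarrow> \<exists>U R. length (U @ 1 # 5 # R) = n \<and> validw 0 (U @ 1 # 5 # R)
   \<and> sum_list (map wt (U @ 1 # 5 # R)) = (6*n+8) div 5"
proof (induction n rule: less_induct)
  case (less n)
  show ?case
  proof (cases "n < 20")
    case True
    then have "n \<in> set (map fst T10)" using less.prems unfolding T10fst set_upt atLeastLessThan_iff by simp
    then obtain U R where m: "(n,U,R) \<in> set T10" by auto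
    have "case (n,U,R) of (n,U,R) \<Rightarrow> length (U @ 1 # 5 # R) = n \<and> validw 0 (U @ 1 # 5 # R)
        \<and> sum_list (map wt (U @ 1 # 5 # R)) = (6*n+8) div 5"
      using T10ok m unfolding list_all_iff by blast
    then show ?thesis by (simp only: prod.case) blast
  next
    case False
    have lt: "n - 10 < n" and ge: "10 \<le> n - 10" using False by auto
    from less.IH[OF lt ge] obtain U R where h: "length (U @ 1 # 5 # R) = n - 10" "validw 0 (U @ 1 # 5 # R)"
      "sum_list (map wt (U @ 1 # 5 # R)) = (6*(n-10)+8) div 5"
      by blast
    let ?R = "[2,8,4,8,2,5,1,11] @ 1 # 5 # R"
    have e: "U @ 1 # 5 # ?R = U @ [1,5,2,8,4,8,2,5,1,11] @ 1 # 5 # R" by simp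
    have "length (U @ 1 # 5 # ?R) = n" using h(1) False by simp
    moreover have "validw 0 (U @ 1 # 5 # ?R)" unfolding e by (rule ins[OF h(2)])
    moreover have "sum_list (map wt (U @ 1 # 5 # ?R)) = (6*n+8) div 5"
    proof -
      have "sum_list (map wt (U @ 1 # 5 # ?R)) = sum_list (map wt (U @ 1 # 5 # R)) + 12"
        unfolding e using wtB by simp
      then show ?thesis using h(3) False by simp
    qed
    ultimately show ?thesis by blast
  qed
qed

lemma seqs: "n \<ge> 5 \<Longrightarrow> \<exists>cs. length cs = n \<and> validw 0 cs \<and> sum_list (map wt cs) = (6*n+8) div 5"
proof (cases "n < 10")
  case True
  assume "n \<ge> 5"
  then have "n \<in> set (map fst T5)" using True unfolding T5fst set_upt atLeastLessThan_iff by simp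
  then obtain cs where m: "(n,cs) \<in> set T5" by auto
  have "case (n,cs) of (n,cs) \<Rightarrow> length cs = n \<and> validw 0 cs \<and> sum_list (map wt cs) = (6*n+8) div 5"
    using T5ok m unfolding list_all_iff by blast
  then show ?thesis by (simp only: prod.case) blast
next
  case False
  then show ?thesis using seqs10[of n] by fastforce
qed

theorem mainTheorem6:
  fixes n :: nat
  assumes "n \<ge> 5"
  shows "(\<exists>S. independent_12_set (grid_vertices 5 n) grid_adj S)
         \<and> i12 (grid_vertices 5 n) grid_adj = (6 * n + 8) div 5"
proof -
  obtain cs where cs: "length cs = n" "validw 0 cs" "sum_list (map wt cs) = (6*n+8) div 5"
    using seqs[OF assms] by blast
  obtain S where S: "independent_12_set (grid_vertices 5 n) grid_adj S" "card S = (6*n+8) div 5"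
    using upper[OF cs(2)] cs(1,3) by auto
  have "i12 (grid_vertices 5 n) grid_adj = (6 * n + 8) div 5"
    unfolding i12_def
  proof (rule Least_equality)
    show "\<exists>S. independent_12_set (grid_vertices 5 n) grid_adj S \<and> card S = (6 * n + 8) div 5"
      using S by blast
  next
    fix k assume "\<exists>S. independent_12_set (grid_vertices 5 n) grid_adj S \<and> card S = k"
    then show "(6 * n + 8) div 5 \<le> k" using lower[OF assms] by blast
  qed
  then show ?thesis using S by blast
qed

end
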